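(* Let $Y_t$ be a random variable taking values in a measurement space $\mathcal Y$, with distribution $p_{y,t}$, and let $p\in(0,1)$ and $\delta\in(0,1)$. Consider the following two cases. (Categorical case) $\mathcal Y$ is a finite set of cardinality $N$. Define $\mathcal R_{t,p}:=\{y\in\mathcal Y : p_{y,t}(\{y\})\ge p\}$. ($\gamma$-quantized case) $\mathcal Y\subset\mathbb R^n$ is bounded, $\gamma>0$, and $\mathcal Y_q$ is a minimal cover of $\mathcal Y$ by closed $\ell_\infty$-balls of radius $\gamma/2$ (called bins), with $N:=|\mathcal Y_q|$ finite (the covering number). Define $\mathcal R^{\gamma}_{t,p}:=\{y : \exists\, y_{\mathrm{bin}}\in\mathcal Y_q \text{ with } y\in y_{\mathrm{bin}} \text{ and } p_{y,t}(y_{\mathrm{bin}})\ge p\}$. Let $y_1,\dots,y_m$ be $m$ i.i.d. samples drawn from the distribution of $Y_t$. If $$ m\ \ge\ \max\left(N,\ \frac{\log(\delta/N)}{\log(1-p)}\right), $$ then $\mathbb P\big(\mathcal R^{(\gamma)}_{t,p}\subset \hat{\mathcal R}_t\big)\ge 1-\delta$, where in the categorical case $\mathcal R^{(\gamma)}_{t,p}=\mathcal R_{t,p}$ and $\hat{\mathcal R}_t=\{y_i\}_{i=1}^m$, and in the $\gamma$-quantized case $\mathcal R^{(\gamma)}_{t,p}=\mathcal R^{\gamma}_{t,p}$ and $\hat{\mathcal R}_t=\bigcup_{i=1}^m \mathcal B_\infty(y_i,\gamma)$, with $\mathcal B_\infty(y_i,\gamma)$ the closed $\ell_\infty$-ball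 centered at $y_i$ of radius $\gamma$.
   Context: Setting: $Y_t=h(X_t)$ is the measurement value at time $t$ of a (possibly stochastic) discrete-time control system ("dialogue process") in which the initial state $X_0$ is drawn from a distribution $p_0$, the inputs are drawn from input distributions, and $h$ is a deterministic readout map into $\mathcal Y$; $p_{y,t}$ denotes the resulting (pushforward) distribution of $Y_t$. The theorem only uses that $y_1,\dots,y_m$ are i.i.d. draws of $Y_t$. The set $\mathcal R^{(\gamma)}_{t,p}$ is called the $p$-approximate (respectively $(p,\gamma)$-approximate) reachable set at time $t$. *)

theory Defs
  imports "HOL-Probability.Probability"
begin

definition linf_cball :: "real^'n \<Rightarrow> real \<Rightarrow> (real^'n) set" where
  "linf_cball c r = {z. \<forall>j. \<bar>z $ j - c $ j\<bar> \<le> r}"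

definition bin_cover :: "real \<Rightarrow> (real^'n) set \<Rightarrow> (real^'n) set set \<Rightarrow> bool" where
  "bin_cover \<gamma> Y Q \<longleftrightarrow> finite Q \<and> Y \<subseteq> \<Union>Q \<and> (\<forall>b\<in>Q. \<exists>c. b = linf_cball c (\<gamma>/2))"

definition min_bin_cover :: "real \<Rightarrow> (real^'n) set \<Rightarrow> (real^'n) set set \<Rightarrow> bool" where
  "min_bin_cover \<gamma> Y Q \<longleftrightarrow> bin_cover \<gamma> Y Q \<and> (\<forall>Q'. bin_cover \<gamma> Y Q' \<longrightarrow> card Q \<le> card Q')"

end

theory Submission imports Defs begin

lemma arith_bound:
  fixes p \<delta> :: real and m N :: nat
  assumes "0 < p" "p < 1" "0 < \<delta>" "N > 0" "real m \<ge> ln (\<delta> / real N) / ln (1 - p)"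
  shows "real N * (1-p)^m \<le> \<delta>"
proof -
  have l: "ln (1-p) < 0" using assms by simp
  have "real m * ln (1-p) \<le> ln (\<delta> / real N)"
    using assms(5) l by (simp add: divide_le_eq mult.commute)
  hence "exp (real m * ln (1-p)) \<le> \<delta> / real N"
    using assms by (metis exp_le_cancel_iff exp_ln divide_pos_pos of_nat_0_less_iff)
  moreover have "exp (real m * ln (1-p)) = (1-p)^m"
    using assms by (simp add: exp_of_nat_mult)
  ultimately show ?thesis using assms by (simp add: field_simps)
qed

lemma (in prob_space) key:
  assumes indep: "indep_vars (\<lambda>_. N) X {..<m}" and m: "m > 0"
    and T: "finite T" "\<And>t. t \<in> T \<Longrightarrow> B t \<in> sets N"
    and pr: "\<And>t i. t \<in> T \<Longrightarrow> i < m \<Longrightarrow> prob (X i -` B t \<inter> space M) \<ge> p"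
  shows "prob (\<Union>t\<in>T. \<Inter>i\<in>{..<m}. X i -` (space N - B t) \<inter> space M) \<le> real (card T) * (1-p)^m"
proof -
  have rv: "\<And>i. i < m \<Longrightarrow> X i \<in> measurable M N" using indep by (auto simp: indep_vars_def)
  have "prob (\<Union>t\<in>T. \<Inter>i\<in>{..<m}. X i -` (space N - B t) \<inter> space M)
     \<le> (\<Sum>t\<in>T. prob (\<Inter>i\<in>{..<m}. X i -` (space N - B t) \<inter> space M))"
  proof (rule finite_measure_subadditive_finite[OF T(1)], safe)
    fix t assume t: "t \<in> T"
    have "\<And>i. i \<in> {..<m} \<Longrightarrow> X i -` (space N - B t) \<inter> space M \<in> events"
      using rv T(2)[OF t] by (auto intro!: measurable_sets)
    thus "(\<Inter>i\<in>{..<m}. X i -` (space N - B t) \<inter> space M) \<in> events"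
      using m by (intro sets.finite_INT) auto
  qed
  also have "\<dots> \<le> (\<Sum>t\<in>T. (1-p)^m)"
  proof (rule sum_mono)
    fix t assume t: "t \<in> T"
    have "prob (\<Inter>i\<in>{..<m}. X i -` (space N - B t) \<inter> space M) = (\<Prod>i\<in>{..<m}. prob (X i -` (space N - B t) \<inter> space M))"
      by (rule indep_varsD[OF indep]) (use m T t in auto)
    also have "\<dots> \<le> (\<Prod>i\<in>{..<m}. 1-p)"
    proof (rule prod_mono)
      fix i assume i: "i \<in> {..<m}"
      have "X i -` (space N - B t) \<inter> space M = space M - (X i -` B t \<inter> space M)"
        using rv[of i] i by (auto simp: measurable_def)
      hence "prob (X i -` (space N - B t) \<inter> space M) = 1 - prob (X i -` B t \<inter> space M)"
        using prob_compl[of "X i -` B t \<inter> space M"] rv[of i] i T(2)[OF t] by (simp add: measurable_sets)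
      thus "0 \<le> prob (X i -` (space N - B t) \<inter> space M) \<and> prob (X i -` (space N - B t) \<inter> space M) \<le> 1 - p"
        using pr[OF t, of i] i by simp
    qed
    finally show "prob (\<Inter>i\<in>{..<m}. X i -` (space N - B t) \<inter> space M) \<le> (1-p)^m" by simp
  qed
  finally show ?thesis by simp
qed

lemma closed_linf: "closed (linf_cball c r)"
  unfolding linf_cball_def
  by (intro closed_Collect_all closed_Collect_le continuous_intros)

lemma sep_choice:
  obtains D :: "(real^'n) set \<Rightarrow> (real^'n) set" where
    "\<And>b. countable (D b) \<and> D b \<subseteq> b \<and> b \<subseteq> closure (D b)"
proof -
  have "\<forall>b::(real^'n) set. \<exists>D. countable D \<and> D \<subseteq> b \<and> b \<subseteq> closure D"
    by (metis separable)
  then show ?thesis using that by metis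
qed

lemma (in prob_space) finish:
  assumes "E \<in> events" "space M - U \<subseteq> E" "U \<in> events" "prob U \<le> \<delta>"
  shows "prob E \<ge> 1 - \<delta>"
proof -
  have "prob (space M - U) \<le> prob E" using assms by (intro finite_measure_mono) auto
  moreover have "prob (space M - U) = 1 - prob U" using prob_compl assms by simp
  ultimately show ?thesis using assms by simp
qed

theorem theorem1:
  fixes p \<delta> :: real and m :: nat
  assumes "0 < p" "p < 1" "0 < \<delta>" "\<delta> < 1"
  shows
   "(\<forall>(P::'w measure) (Ycat::'y set) (pY::'y measure) (Y::nat \<Rightarrow> 'w \<Rightarrow> 'y).
      prob_space P \<and> finite Ycat
      \<and> prob_space.indep_vars P (\<lambda>_. count_space Ycat) Y {..<m}
      \<and> (\<forall>i<m. distr P (count_space Ycat) (Y i) = pY)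
      \<and> real m \<ge> max (real (card Ycat)) (ln (\<delta> / real (card Ycat)) / ln (1 - p))
      \<longrightarrow> measure P {\<omega> \<in> space P. {y \<in> Ycat. measure pY {y} \<ge> p} \<subseteq> (\<lambda>i. Y i \<omega>) ` {..<m}}
            \<ge> 1 - \<delta>)
  \<and> (\<forall>(P::'v measure) (Yset::(real^'n) set) (\<gamma>::real) (Yq::(real^'n) set set)
       (pY::(real^'n) measure) (Y::nat \<Rightarrow> 'v \<Rightarrow> real^'n).
      prob_space P \<and> bounded Yset \<and> \<gamma> > 0 \<and> min_bin_cover \<gamma> Yset Yq
      \<and> prob_space.indep_vars P (\<lambda>_. borel) Y {..<m}
      \<and> (\<forall>i<m. \<forall>\<omega>\<in>space P. Y i \<omega> \<in> Yset)
      \<and> (\<forall>i<m. distr P borel (Y i) = pY)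
      \<and> real m \<ge> max (real (card Yq)) (ln (\<delta> / real (card Yq)) / ln (1 - p))
      \<longrightarrow> measure P {\<omega> \<in> space P.
              {y. \<exists>b\<in>Yq. y \<in> b \<and> measure pY b \<ge> p} \<subseteq> (\<Union>i<m. linf_cball (Y i \<omega>) \<gamma>)}
            \<ge> 1 - \<delta>)"
proof (intro conjI allI impI)
  fix P :: "'w measure" and Ycat :: "'y set" and pY :: "'y measure" and Y :: "nat \<Rightarrow> 'w \<Rightarrow> 'y"
  assume H: "prob_space P \<and> finite Ycat
      \<and> prob_space.indep_vars P (\<lambda>_. count_space Ycat) Y {..<m}
      \<and> (\<forall>i<m. distr P (count_space Ycat) (Y i) = pY)
      \<and> real m \<ge> max (real (card Ycat)) (ln (\<delta> / real (card Ycat)) / ln (1 - p))"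
  interpret prob_space P using H by simp
  define S where "S = {y \<in> Ycat. measure pY {y} \<ge> p}"
  define U where "U = (\<Union>y\<in>S. \<Inter>i\<in>{..<m}. Y i -` (space (count_space Ycat) - {y}) \<inter> space P)"
  have indep: "indep_vars (\<lambda>_. count_space Ycat) Y {..<m}" using H by simp
  have rv: "\<And>i. i < m \<Longrightarrow> Y i \<in> measurable P (count_space Ycat)" using indep by (auto simp: indep_vars_def)
  show "measure P {\<omega> \<in> space P. {y \<in> Ycat. measure pY {y} \<ge> p} \<subseteq> (\<lambda>i. Y i \<omega>) ` {..<m}} \<ge> 1 - \<delta>"
  proof (cases "card Ycat = 0")
    case True
    hence "Ycat = {}" using H by simp
    thus ?thesis using assms by (simp add: prob_space)
  next
    case False
    hence m: "m > 0" using H by linarith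
    have SN: "card S \<le> card Ycat" unfolding S_def using H by (intro card_mono) auto
    have fS: "finite S" unfolding S_def using H by simp
    have "prob U \<le> real (card S) * (1-p)^m"
      unfolding U_def
    proof (rule key[OF indep m fS])
      fix t assume "t \<in> S" thus "{t} \<in> sets (count_space Ycat)" by (simp add: S_def)
    next
      fix t i assume t: "t \<in> S" and i: "i < m"
      have "measure pY {t} = measure (distr P (count_space Ycat) (Y i)) {t}" using H i by simp
      also have "\<dots> = prob (Y i -` {t} \<inter> space P)"
        using t rv[OF i] by (intro measure_distr) (auto simp: S_def)
      finally show "p \<le> prob (Y i -` {t} \<inter> space P)" using t by (simp add: S_def)
    qed
    also have "\<dots> \<le> real (card Ycat) * (1-p)^m"
      using SN assms by (intro mult_right_mono) auto
    also have "\<dots> \<le> \<delta>" using arith_bound[of p \<delta> "card Ycat" m] assms H False by simp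
    finally have pU: "prob U \<le> \<delta>" .
    have Uev: "U \<in> events" unfolding U_def using fS rv m
      by (intro sets.finite_UN sets.finite_INT measurable_sets) auto
    have E: "{\<omega> \<in> space P. {y \<in> Ycat. measure pY {y} \<ge> p} \<subseteq> (\<lambda>i. Y i \<omega>) ` {..<m}} = space P - U"
    proof -
      have "\<And>\<omega> i. \<omega> \<in> space P \<Longrightarrow> i < m \<Longrightarrow> Y i \<omega> \<in> Ycat"
        using rv by (auto simp: measurable_def)
      thus ?thesis unfolding U_def S_def by auto blast+
    qed
    show ?thesis unfolding E using finish[of "space P - U" U \<delta>] Uev pU by auto
  qed
next
  fix P :: "'v measure" and Yset :: "(real^'n) set" and \<gamma> :: real and Yq :: "(real^'n) set set"
    and pY :: "(real^'n) measure" and Y :: "nat \<Rightarrow> 'v \<Rightarrow> real^'n"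
  assume H: "prob_space P \<and> bounded Yset \<and> \<gamma> > 0 \<and> min_bin_cover \<gamma> Yset Yq
      \<and> prob_space.indep_vars P (\<lambda>_. borel) Y {..<m}
      \<and> (\<forall>i<m. \<forall>\<omega>\<in>space P. Y i \<omega> \<in> Yset)
      \<and> (\<forall>i<m. distr P borel (Y i) = pY)
      \<and> real m \<ge> max (real (card Yq)) (ln (\<delta> / real (card Yq)) / ln (1 - p))"
  interpret prob_space P using H by simp
  have fYq: "finite Yq" and bins: "\<And>b. b \<in> Yq \<Longrightarrow> \<exists>c. b = linf_cball c (\<gamma>/2)"
    using H by (auto simp: min_bin_cover_def bin_cover_def)
  have bsets: "\<And>b. b \<in> Yq \<Longrightarrow> b \<in> sets borel"
    using bins closed_linf by (metis borel_closed)
  define T where "T = {b \<in> Yq. measure pY b \<ge> p}"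
  define U where "U = (\<Union>b\<in>T. \<Inter>i\<in>{..<m}. Y i -` (space borel - b) \<inter> space P)"
  define E where "E = {\<omega> \<in> space P.
              {y. \<exists>b\<in>Yq. y \<in> b \<and> measure pY b \<ge> p} \<subseteq> (\<Union>i<m. linf_cball (Y i \<omega>) \<gamma>)}"
  have indep: "indep_vars (\<lambda>_. borel) Y {..<m}" using H by simp
  have rv: "\<And>i. i < m \<Longrightarrow> Y i \<in> borel_measurable P" using indep by (auto simp: indep_vars_def)
  have fT: "finite T" unfolding T_def using fYq by simp
  show "measure P E \<ge> 1 - \<delta>"
  proof (cases "card Yq = 0")
    case True
    hence "Yq = {}" using fYq by simp
    hence "E = space P" unfolding E_def by auto
    thus ?thesis using assms by (simp add: prob_space)
  next
    case False
    hence m: "m > 0" using H by linarith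
    have TN: "card T \<le> card Yq" unfolding T_def using fYq by (intro card_mono) auto
    have "prob U \<le> real (card T) * (1-p)^m"
      unfolding U_def
    proof (rule key[OF indep m fT])
      fix t assume "t \<in> T" thus "t \<in> sets borel" using bsets by (simp add: T_def)
    next
      fix t i assume t: "t \<in> T" and i: "i < m"
      have "measure pY t = measure (distr P borel (Y i)) t" using H i by simp
      also have "\<dots> = prob (Y i -` t \<inter> space P)"
        using t rv[OF i] bsets by (intro measure_distr) (auto simp: T_def)
      finally show "p \<le> prob (Y i -` t \<inter> space P)" using t by (simp add: T_def)
    qed
    also have "\<dots> \<le> real (card Yq) * (1-p)^m"
      using TN assms by (intro mult_right_mono) auto
    also have "\<dots> \<le> \<delta>" using arith_bound[of p \<delta> "card Yq" m] assms H False by simp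
    finally have pU: "prob U \<le> \<delta>" .
    have Uev: "U \<in> events" unfolding U_def using fT rv m bsets
      by (intro sets.finite_UN sets.finite_INT measurable_sets) (auto simp: T_def)
    obtain D :: "(real^'n) set \<Rightarrow> (real^'n) set" where
      D: "\<And>b. countable (D b) \<and> D b \<subseteq> b \<and> b \<subseteq> closure (D b)" using sep_choice by blast
    define F where "F y = space P - (\<Union>i\<in>{..<m}. Y i -` linf_cball y \<gamma> \<inter> space P)" for y
    have Fev: "F y \<in> events" for y
      unfolding F_def using rv closed_linf
      by (intro sets.Diff sets.top sets.finite_UN measurable_sets) (auto intro: borel_closed)
    have symm: "y \<in> linf_cball x \<gamma> \<longleftrightarrow> x \<in> linf_cball y \<gamma>" for x y :: "real^'n"
      unfolding linf_cball_def by (simp add: abs_minus_commute)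
    have Eeq: "E = space P - (\<Union>b\<in>T. \<Union>y\<in>D b. F y)"
    proof -
      have "({y. \<exists>b\<in>Yq. y \<in> b \<and> measure pY b \<ge> p} \<subseteq> (\<Union>i<m. linf_cball (Y i \<omega>) \<gamma>))
          \<longleftrightarrow> (\<forall>b\<in>T. \<forall>y\<in>D b. \<exists>i<m. Y i \<omega> \<in> linf_cball y \<gamma>)" for \<omega>
      proof
        assume "{y. \<exists>b\<in>Yq. y \<in> b \<and> measure pY b \<ge> p} \<subseteq> (\<Union>i<m. linf_cball (Y i \<omega>) \<gamma>)"
        thus "\<forall>b\<in>T. \<forall>y\<in>D b. \<exists>i<m. Y i \<omega> \<in> linf_cball y \<gamma>"
          using D unfolding T_def symm by blast
      next
        assume A: "\<forall>b\<in>T. \<forall>y\<in>D b. \<exists>i<m. Y i \<omega> \<in> linf_cball y \<gamma>"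
        have cl: "closed (\<Union>i<m. linf_cball (Y i \<omega>) \<gamma>)" using closed_linf by (intro closed_UN) auto
        have "b \<subseteq> (\<Union>i<m. linf_cball (Y i \<omega>) \<gamma>)" if b: "b \<in> T" for b
        proof -
          have "D b \<subseteq> (\<Union>i<m. linf_cball (Y i \<omega>) \<gamma>)" using A b symm by blast
          hence "closure (D b) \<subseteq> (\<Union>i<m. linf_cball (Y i \<omega>) \<gamma>)" using cl by (rule closure_minimal)
          thus ?thesis using D by blast
        qed
        thus "{y. \<exists>b\<in>Yq. y \<in> b \<and> measure pY b \<ge> p} \<subseteq> (\<Union>i<m. linf_cball (Y i \<omega>) \<gamma>)"
          unfolding T_def by blast
      qed
      hence e1: "\<omega> \<in> E \<longleftrightarrow> \<omega> \<in> space P \<and> (\<forall>b\<in>T. \<forall>y\<in>D b. \<exists>i<m. Y i \<omega> \<in> linf_cball y \<gamma>)" for \<omega>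
        unfolding E_def by simp
      have f: "\<omega> \<in> F y \<longleftrightarrow> \<omega> \<in> space P \<and> \<not> (\<exists>i<m. Y i \<omega> \<in> linf_cball y \<gamma>)" for \<omega> y
        unfolding F_def by auto
      have e2: "\<omega> \<in> space P - (\<Union>b\<in>T. \<Union>y\<in>D b. F y) \<longleftrightarrow> \<omega> \<in> space P \<and> (\<forall>b\<in>T. \<forall>y\<in>D b. \<exists>i<m. Y i \<omega> \<in> linf_cball y \<gamma>)" for \<omega>
        using f by blast
      show ?thesis using e1 e2 by (intro set_eqI) simp
    qed
    have Eev: "E \<in> events" unfolding Eeq
      using fT D Fev by (intro sets.Diff sets.top sets.countable_UN'' countable_UN) (auto intro: countable_finite)
    have sub: "space P - U \<subseteq> E"
    proof
      fix \<omega> assume w: "\<omega> \<in> space P - U"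
      have "b \<subseteq> (\<Union>i<m. linf_cball (Y i \<omega>) \<gamma>)" if b: "b \<in> T" for b
      proof -
        have "\<not> (\<forall>i<m. Y i \<omega> \<notin> b)" using w b m unfolding U_def space_borel by blast
        then obtain i where i: "i < m" "Y i \<omega> \<in> b" by auto
        obtain c where c: "b = linf_cball c (\<gamma>/2)" using bins b by (auto simp: T_def)
        have "b \<subseteq> linf_cball (Y i \<omega>) \<gamma>"
        proof
          fix y assume y: "y \<in> b"
          show "y \<in> linf_cball (Y i \<omega>) \<gamma>" unfolding linf_cball_def
          proof (intro CollectI allI)
            fix j
            have "\<bar>y $ j - c $ j\<bar> \<le> \<gamma> / 2" "\<bar>Y i \<omega> $ j - c $ j\<bar> \<le> \<gamma> / 2"
              using y i(2) unfolding c linf_cball_def by auto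
            thus "\<bar>y $ j - Y i \<omega> $ j\<bar> \<le> \<gamma>" by linarith
          qed
        qed
        thus ?thesis using i by blast
      qed
      thus "\<omega> \<in> E" using w unfolding E_def T_def by blast
    qed
    show ?thesis using finish[OF Eev sub Uev pU] .
  qed
qed

end
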